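(* Let $n\geq 1$ be an integer and $\gamma$ a real number with $0<\gamma\leq 1/64$ and $n+2\leq \gamma^{-1/2}/16$. Let $\lambda=\sqrt{8}+\gamma$ and $\Delta=\sqrt{\lambda^2-8}$. Then $\Delta\leq 4\sqrt{\gamma}$, and for every integer $i$ with $0\leq i\leq n+2$: (1) $0<\frac{2\Delta}{\lambda+\Delta}<\frac{2\Delta}{\lambda-\Delta}<\frac{1}{2(n+2)}$; (2) $1+\frac{i\Delta}{\lambda-\Delta}\leq\left(\frac{\lambda+\Delta}{\lambda-\Delta}\right)^i\leq 1+\frac{4i\Delta}{\lambda-\Delta}$; (3) $1-\frac{4i\Delta}{\lambda+\Delta}\leq\left(\frac{\lambda-\Delta}{\lambda+\Delta}\right)^i\leq 1-\frac{i\Delta}{\lambda+\Delta}$; (4) $1+\frac{1}{2(n+1)}\leq \dfrac{1-\left(\frac{\lambda+\Delta}{\lambda-\Delta}\right)^{n+2}}{1-\left(\frac{\lambda+\Delta}{\lambda-\Delta}\right)^{n+1}}\leq 1+\frac{4}{n+1}$. *)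

theory Defs
  imports Complex_Main
begin

end

theory Submission
  imports Defs
begin

lemma up1:
  fixes x :: real
  assumes "0 \<le> x" "real k * x \<le> 1/2"
  shows "(1+x)^k \<le> 1 + 2 * real k * x"
  using assms
proof (induction k)
  case 0 then show ?case by simp
next
  case (Suc k)
  have kx: "real k * x \<le> 1/2" using Suc.prems by (simp add: algebra_simps)
  have "(1+x)^Suc k = (1+x)^k * (1+x)" by simp
  also have "\<dots> \<le> (1 + 2 * real k * x) * (1+x)"
    using Suc.IH[OF Suc.prems(1) kx] Suc.prems(1) by (intro mult_right_mono) auto
  also have "\<dots> \<le> 1 + 2 * real (Suc k) * x"
  proof -
    have "2 * real k * x * x \<le> x" using kx Suc.prems(1)
    proof -
      have "2 * real k * x \<le> 1" using kx by simp
      then have "(2 * real k * x) * x \<le> 1 * x" using Suc.prems(1) by (intro mult_right_mono) auto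
      then show ?thesis by simp
    qed
    then show ?thesis by (simp add: algebra_simps)
  qed
  finally show ?case .
qed

lemma up2:
  fixes y :: real
  assumes "0 \<le> y" "y \<le> 1" "real k * y \<le> 1"
  shows "(1-y)^k \<le> 1 - real k * y / 2"
  using assms
proof (induction k)
  case 0 then show ?case by simp
next
  case (Suc k)
  have ky: "real k * y \<le> 1" using Suc.prems by (simp add: algebra_simps)
  have "(1-y)^Suc k = (1-y)^k * (1-y)" by simp
  also have "\<dots> \<le> (1 - real k * y / 2) * (1-y)"
    using Suc.IH[OF Suc.prems(1,2) ky] Suc.prems(2) by (intro mult_right_mono) auto
  also have "\<dots> \<le> 1 - real (Suc k) * y / 2"
  proof -
    have "real k * y * y \<le> y" using ky Suc.prems(1)
    proof -
      have "(real k * y) * y \<le> 1 * y" using ky Suc.prems(1) by (intro mult_right_mono) auto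
      then show ?thesis by simp
    qed
    moreover have "(1 - real k * y / 2) * (1-y) = 1 - real (Suc k) * y / 2 - (y - real k * y * y)/2"
      by (simp add: field_simps)
    ultimately show ?thesis by (smt (verit) divide_nonneg_nonneg)
  qed
  finally show ?case .
qed

theorem claim1:
  fixes n :: nat and gam lam Delta :: real
  assumes "n \<ge> 1"
    and "0 < gam" and "gam \<le> 1/64"
    and "real n + 2 \<le> (1 / sqrt gam) / 16"
    and "lam = sqrt 8 + gam"
    and "Delta = sqrt (lam^2 - 8)"
  shows "Delta \<le> 4 * sqrt gam \<and>
    (\<forall>i::nat. i \<le> n + 2 \<longrightarrow>
      (0 < 2*Delta/(lam+Delta) \<and> 2*Delta/(lam+Delta) < 2*Delta/(lam-Delta)
        \<and> 2*Delta/(lam-Delta) < 1 / (2 * (real n + 2)))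
      \<and> (1 + real i * Delta/(lam-Delta) \<le> ((lam+Delta)/(lam-Delta))^i
        \<and> ((lam+Delta)/(lam-Delta))^i \<le> 1 + 4 * real i * Delta/(lam-Delta))
      \<and> (1 - 4 * real i * Delta/(lam+Delta) \<le> ((lam-Delta)/(lam+Delta))^i
        \<and> ((lam-Delta)/(lam+Delta))^i \<le> 1 - real i * Delta/(lam+Delta))
      \<and> (1 + 1 / (2 * (real n + 1)) \<le>
            (1 - ((lam+Delta)/(lam-Delta))^(n+2)) / (1 - ((lam+Delta)/(lam-Delta))^(n+1))
        \<and> (1 - ((lam+Delta)/(lam-Delta))^(n+2)) / (1 - ((lam+Delta)/(lam-Delta))^(n+1))
            \<le> 1 + 4 / (real n + 1)))"
proof -
  define s where "s = sqrt 8"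
  define t where "t = sqrt gam"
  have s2: "s^2 = 8" and s0: "s > 0" unfolding s_def by simp_all
  have sb: "s < 3" by (rule power_less_imp_less_base[where n=2]) (use s2 s0 in auto)
  have sb2: "s > 5/2" by (rule power_less_imp_less_base[where n=2]) (use s2 s0 in \<open>auto simp: power2_eq_square\<close>)
  have t2: "t^2 = gam" and t0: "t > 0" unfolding t_def using assms(2) by simp_all
  have tb: "t \<le> 1/8"
  proof -
    have "t^2 \<le> (1/8)^2" using t2 assms(3) by (simp add: power2_eq_square)
    then show ?thesis by (rule power2_le_imp_le) simp
  qed
  have nt: "(real n + 2) * t \<le> 1/16"
    using assms(4) t0 unfolding t_def by (simp add: field_simps)
  have lD: "lam^2 - 8 = 2*s*gam + gam^2" using assms(5) s2 unfolding s_def[symmetric]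
    by (simp add: power2_eq_square algebra_simps)
  have Dpos: "Delta > 0" and DD: "Delta^2 = 2*s*gam + gam^2"
    using assms(6) lD s0 assms(2) by (simp_all add: add_pos_pos)
  have Db: "Delta \<le> 4 * t"
  proof -
    have "s*gam \<le> 3 * gam" using sb assms(2) by (intro mult_right_mono) auto
    then have "2*s*gam \<le> 6 * gam" by linarith
    moreover have "gam^2 \<le> gam" using assms(2,3) by (simp add: power2_eq_square mult_le_one)
    ultimately have "Delta^2 \<le> 16 * gam" using DD assms(2) by linarith
    also have "\<dots> = (4*t)^2" using t2 by (simp add: power2_eq_square)
    finally have "Delta^2 \<le> (4*t)^2" .
    then show ?thesis by (rule power2_le_imp_le) (use t0 in simp)
  qed
  have lamDpos: "lam - Delta > 2" using assms(5) sb2 Db tb assms(2) unfolding s_def[symmetric] by linarith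
  define x where "x = 2*Delta/(lam-Delta)"
  define y where "y = 2*Delta/(lam+Delta)"
  have x0: "x > 0" unfolding x_def using Dpos lamDpos by simp
  have y0: "y > 0" unfolding y_def using Dpos lamDpos by simp
  have xD: "x < Delta"
  proof -
    have "Delta * 2 < Delta * (lam-Delta)" using Dpos lamDpos by (intro mult_strict_left_mono) auto
    then show ?thesis unfolding x_def using lamDpos by (subst pos_divide_less_eq) (auto simp: mult.commute)
  qed
  have yx: "y < x" unfolding x_def y_def using Dpos lamDpos
    by (intro divide_strict_left_mono) auto
  have y1: "y < 1" unfolding y_def using Dpos lamDpos by (simp add: field_simps)
  have nx: "(real n + 2) * x < 1/4"
  proof -
    have "(real n + 2) * x < (real n + 2) * (4*t)" using xD Db by (intro mult_strict_left_mono) auto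
    also have "\<dots> = 4 * ((real n + 2) * t)" by simp
    also have "\<dots> \<le> 1/4" using nt by simp
    finally show ?thesis .
  qed
  have x_ub: "x < 1 / (2 * (real n + 2))" using nx by (simp add: field_simps)
  have r: "(lam+Delta)/(lam-Delta) = 1 + x" unfolding x_def using lamDpos by (simp add: field_simps)
  have q: "(lam-Delta)/(lam+Delta) = 1 - y" unfolding y_def using lamDpos Dpos by (simp add: field_simps)
  have Dt: "Delta \<le> 4 * sqrt gam" using Db t_def by simp
  have ix: "\<And>i. i \<le> n+2 \<Longrightarrow> real i * x \<le> 1/4"
  proof -
    fix i assume "i \<le> n+2"
    then have "real i \<le> real n + 2" by simp
    then have "real i * x \<le> (real n + 2) * x" using x0 by (intro mult_right_mono) auto
    then show "real i * x \<le> 1/4" using nx by simp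
  qed
  have iy: "\<And>i. i \<le> n+2 \<Longrightarrow> real i * y \<le> 1/4"
  proof -
    fix i assume "i \<le> n+2"
    have "real i * y \<le> real i * x" using yx by (intro mult_left_mono) auto
    then show "real i * y \<le> 1/4" using ix[OF \<open>i \<le> n+2\<close>] by simp
  qed
  have P2: "1 + real i * Delta/(lam-Delta) \<le> (1+x)^i \<and> (1+x)^i \<le> 1 + 4 * real i * Delta/(lam-Delta)"
    if "i \<le> n+2" for i
  proof
    have "1 + real i * x \<le> (1+x)^i" using Bernoulli_inequality[of x i] x0 by simp
    moreover have "real i * Delta/(lam-Delta) \<le> real i * x"
    proof -
      have "real i * x = 2 * (real i * Delta/(lam-Delta))" unfolding x_def by simp
      moreover have "0 \<le> real i * Delta/(lam-Delta)" using Dpos lamDpos by simp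
      ultimately show ?thesis by (smt (verit))
    qed
    ultimately show "1 + real i * Delta/(lam-Delta) \<le> (1+x)^i" by linarith
    have "(1+x)^i \<le> 1 + 2 * real i * x" using up1[of x i] x0 ix[OF that] by simp
    moreover have "2 * real i * x = 4 * real i * Delta/(lam-Delta)" unfolding x_def by simp
    ultimately show "(1+x)^i \<le> 1 + 4 * real i * Delta/(lam-Delta)" by simp
  qed
  have P3: "1 - 4 * real i * Delta/(lam+Delta) \<le> (1-y)^i \<and> (1-y)^i \<le> 1 - real i * Delta/(lam+Delta)"
    if "i \<le> n+2" for i
  proof
    have "1 + real i * (-y) \<le> (1+(-y))^i" using Bernoulli_inequality[of "-y" i] y1 by simp
    moreover have "real i * y \<le> 4 * real i * Delta/(lam+Delta)"
    proof -
      have "real i * y = 2 * (real i * Delta/(lam+Delta))" unfolding y_def by simp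
      moreover have "4 * real i * Delta/(lam+Delta) = 4 * (real i * Delta/(lam+Delta))" by simp
      moreover have "0 \<le> real i * Delta/(lam+Delta)" using Dpos lamDpos by simp
      ultimately show ?thesis by (smt (verit))
    qed
    ultimately show "1 - 4 * real i * Delta/(lam+Delta) \<le> (1-y)^i" by simp
    have "(1-y)^i \<le> 1 - real i * y / 2" using up2[of y i] y0 y1 iy[OF that] by simp
    moreover have "real i * y / 2 = real i * Delta/(lam+Delta)" unfolding y_def using Dpos lamDpos by (simp add: field_simps)
    ultimately show "(1-y)^i \<le> 1 - real i * Delta/(lam+Delta)" by simp
  qed
  define m where "m = real n + 1"
  have m1: "m \<ge> 2" unfolding m_def using assms(1) by simp
  have P4: "1 + 1 / (2 * m) \<le> (1 - (1+x)^(n+2)) / (1 - (1+x)^(n+1))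
        \<and> (1 - (1+x)^(n+2)) / (1 - (1+x)^(n+1)) \<le> 1 + 4 / m"
  proof -
    define R where "R = (1+x)^(n+1)"
    have Rl: "1 + m * x \<le> R" unfolding R_def m_def using Bernoulli_inequality[of x "n+1"] x0 by (simp add: algebra_simps)
    have Ru: "R \<le> 1 + 2 * m * x" unfolding R_def m_def using up1[of x "n+1"] x0 ix[of "n+1"] by (simp add: algebra_simps)
    have mx: "m * x \<le> 1/4" unfolding m_def using ix[of "n+1"] by (simp add: algebra_simps)
    have R1: "R - 1 > 0" using Rl m1 x0 by (smt (verit) mult_pos_pos)
    have eq: "(1 - (1+x)^(n+2)) / (1 - (1+x)^(n+1)) = 1 + R * x / (R - 1)"
    proof -
      have "(1+x)^(n+2) = R * (1+x)" unfolding R_def by simp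
      then show ?thesis using R1 unfolding R_def[symmetric] by (simp add: field_simps)
    qed
    have e2: "2 * m * x = 2 * (m * x)" by simp
    have mx0: "0 < m * x" using m1 x0 by simp
    have lo: "1 / (2*m) \<le> R * x / (R - 1)"
    proof -
      have b: "x \<le> R * x" using R1 x0 by simp
      have d: "R - 1 \<le> 2*m*x" using Ru by linarith
      have "x / (2*m*x) \<le> R * x / (R - 1)"
        by (rule frac_le) (use x0 b R1 d in auto)
      then show ?thesis using x0 by simp
    qed
    have hi: "R * x / (R - 1) \<le> 4 / m"
    proof -
      have R2: "R \<le> 2" using Ru mx e2 by linarith
      have b: "R * x \<le> 2 * x" using R2 x0 by simp
      have d: "m * x \<le> R - 1" using Rl by linarith
      have "R * x / (R - 1) \<le> 2 * x / (m*x)"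
        by (rule frac_le) (use x0 b mx0 d in auto)
      also have "\<dots> = 2 / m" using x0 by simp
      also have "\<dots> \<le> 4 / m" using m1 by (simp add: divide_right_mono)
      finally show ?thesis .
    qed
    show ?thesis using eq lo hi by simp
  qed
  show ?thesis
    unfolding r q x_def[symmetric] y_def[symmetric] m_def[symmetric]
    using Dt P2 P3 P4 y0 yx x_ub by blast
qed

end
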